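(* Let $\mathcal A_V$ be the algebra of Laurent polynomials in $a_V,b_V,c_V,d_V$ with the log-canonical Poisson bracket $\{a_V,b_V\}=a_Vb_V$, $\{a_V,c_V\}=0$, $\{a_V,d_V\}=-\tfrac12 a_Vd_V$, $\{b_V,c_V\}=0$, $\{b_V,d_V\}=-\tfrac12 b_Vd_V$, $\{c_V,d_V\}=-\tfrac12 c_Vd_V$. Let $\mathcal A_{III}$ be the algebra of Laurent polynomials in $a,b,c,d,e,f,g,h$ with the log-canonical bracket $\{a,b\}=\tfrac12 ab,\ \{a,c\}=0,\ \{a,d\}=-\tfrac14 ad,\ \{a,e\}=\tfrac14 ae,\ \{a,f\}=\tfrac14 af,\ \{a,g\}=-\tfrac14 ag,\ \{a,h\}=\tfrac14 ah,$ $\{b,c\}=0,\ \{b,d\}=-\tfrac14 bd,\ \{b,e\}=\tfrac14 be,\ \{b,f\}=-\tfrac14 bf,\ \{b,g\}=-\tfrac14 bg,\ \{b,h\}=\tfrac14 bh,$ $\{c,d\}=-\tfrac12 cd,\ \{c,e\}=\tfrac12 ce,\ \{c,f\}=\{c,g\}=\{c,h\}=0,$ $\{d,e\}=0,\ \{d,f\}=\tfrac14 df,\ \{d,g\}=\{d,h\}=0,$ $\{e,f\}=-\tfrac14 ef,\ \{e,g\}=\{e,h\}=0,\ \{f,g\}=\tfrac14 fg,\ \{f,h\}=-\tfrac14 fh,\ \{h,g\}=0$. Then the assignment $a_V\mapsto af$, $b_V\mapsto bf$, $c_V\mapsto c$, $d_V\mapsto d$ defines an injective Poisson homomorphism $\mathcal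 A_V\to\mathcal A_{III}$, realising $\mathcal A_V$ as the Poisson subalgebra of functions of $af,bf,c,d$; moreover $h$ and $g$ Poisson commute with this subalgebra.
   Context: A log-canonical bracket is extended from the generators to all Laurent polynomials by bilinearity, antisymmetry and the Leibniz rule. *)

theory Defs
  imports Complex_Main "HOL-Library.Poly_Mapping"
begin

text \<open>A Laurent polynomial is a finitely supported map from integer exponent vectors
  (finitely supported maps 'v to int) to real coefficients; the ring structure is the
  convolution product of Poly_Mapping.\<close>

type_synonym 'v laurent = "('v \<Rightarrow>\<^sub>0 int) \<Rightarrow>\<^sub>0 real"

definition lvar :: "'v \<Rightarrow> 'v laurent" where
  "lvar v = Poly_Mapping.single (Poly_Mapping.single v 1) 1"

text \<open>This is the unique extension of the bracket on the generators by bilinearity,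
  antisymmetry and the Leibniz rule.\<close>

definition lc_form :: "('v \<Rightarrow> 'v \<Rightarrow> real) \<Rightarrow> ('v \<Rightarrow>\<^sub>0 int) \<Rightarrow> ('v \<Rightarrow>\<^sub>0 int) \<Rightarrow> real" where
  "lc_form Om al be =
     (\<Sum>i\<in>Poly_Mapping.keys al. \<Sum>j\<in>Poly_Mapping.keys be. of_int (Poly_Mapping.lookup al i) * of_int (Poly_Mapping.lookup be j) * Om i j)"

definition lc_bracket :: "('v \<Rightarrow> 'v \<Rightarrow> real) \<Rightarrow> 'v laurent \<Rightarrow> 'v laurent \<Rightarrow> 'v laurent" where
  "lc_bracket Om p q =
     (\<Sum>al\<in>Poly_Mapping.keys p. \<Sum>be\<in>Poly_Mapping.keys q.
        Poly_Mapping.single (al + be) (Poly_Mapping.lookup p al * Poly_Mapping.lookup q be * lc_form Om al be))"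

definition exp_subst :: "('v \<Rightarrow> ('w \<Rightarrow>\<^sub>0 int)) \<Rightarrow> ('v \<Rightarrow>\<^sub>0 int) \<Rightarrow> ('w \<Rightarrow>\<^sub>0 int)" where
  "exp_subst E al = (\<Sum>i\<in>Poly_Mapping.keys al. Poly_Mapping.map (\<lambda>k. Poly_Mapping.lookup al i * k) (E i))"

definition mono_subst :: "('v \<Rightarrow> ('w \<Rightarrow>\<^sub>0 int)) \<Rightarrow> 'v laurent \<Rightarrow> 'w laurent" where
  "mono_subst E p = (\<Sum>al\<in>Poly_Mapping.keys p. Poly_Mapping.single (exp_subst E al) (Poly_Mapping.lookup p al))"

datatype varV = aV | bV | cV | dV
datatype var3 = A | B | C | D | E | F | G | H

fun upV :: "varV \<Rightarrow> varV \<Rightarrow> real" where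
  "upV aV bV = 1"
| "upV aV dV = -1/2"
| "upV bV dV = -1/2"
| "upV cV dV = -1/2"
| "upV _ _ = 0"

definition OmV :: "varV \<Rightarrow> varV \<Rightarrow> real" where
  "OmV x y = upV x y - upV y x"

fun up3 :: "var3 \<Rightarrow> var3 \<Rightarrow> real" where
  "up3 A B = 1/2"
| "up3 A D = -1/4"
| "up3 A E = 1/4"
| "up3 A F = 1/4"
| "up3 A G = -1/4"
| "up3 A H = 1/4"
| "up3 B D = -1/4"
| "up3 B E = 1/4"
| "up3 B F = -1/4"
| "up3 B G = -1/4"
| "up3 B H = 1/4"
| "up3 C D = -1/2"
| "up3 C E = 1/2"
| "up3 D F = 1/4"
| "up3 E F = -1/4"
| "up3 F G = 1/4"
| "up3 F H = -1/4"
| "up3 _ _ = 0"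

definition Om3 :: "var3 \<Rightarrow> var3 \<Rightarrow> real" where
  "Om3 x y = up3 x y - up3 y x"

fun imgV :: "varV \<Rightarrow> (var3 \<Rightarrow>\<^sub>0 int)" where
  "imgV aV = Poly_Mapping.single A 1 + Poly_Mapping.single F 1"
| "imgV bV = Poly_Mapping.single B 1 + Poly_Mapping.single F 1"
| "imgV cV = Poly_Mapping.single C 1"
| "imgV dV = Poly_Mapping.single D 1"

definition phi :: "varV laurent \<Rightarrow> var3 laurent" where
  "phi = mono_subst imgV"

end

theory Submission imports Defs begin

lemma pm_expand: "p = (\<Sum>a\<in>Poly_Mapping.keys p. Poly_Mapping.single a (Poly_Mapping.lookup p a))"
  by (rule poly_mapping_eqI) (simp add: lookup_sum lookup_single when_def in_keys_iff)

lemma lcb_super: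
  assumes "finite S" "Poly_Mapping.keys p \<subseteq> S" "finite T" "Poly_Mapping.keys q \<subseteq> T"
  shows "lc_bracket Om p q = (\<Sum>al\<in>S. \<Sum>be\<in>T.
        Poly_Mapping.single (al + be) (Poly_Mapping.lookup p al * Poly_Mapping.lookup q be * lc_form Om al be))"
proof -
  have i: "\<And>al. (\<Sum>be\<in>Poly_Mapping.keys q.
        Poly_Mapping.single (al + be) (Poly_Mapping.lookup p al * Poly_Mapping.lookup q be * lc_form Om al be))
     = (\<Sum>be\<in>T.
        Poly_Mapping.single (al + be) (Poly_Mapping.lookup p al * Poly_Mapping.lookup q be * lc_form Om al be))"
    by (rule sum.mono_neutral_left) (use assms in \<open>auto simp: in_keys_iff\<close>)
  show ?thesis
    unfolding lc_bracket_def i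
    by (rule sum.mono_neutral_left) (use assms in \<open>auto simp: in_keys_iff\<close>)
qed

lemma lcb_add1: "lc_bracket Om (p1 + p2) q = lc_bracket Om p1 q + lc_bracket Om p2 q"
proof -
  let ?S = "Poly_Mapping.keys p1 \<union> Poly_Mapping.keys p2"
  have k: "Poly_Mapping.keys (p1 + p2) \<subseteq> ?S" by (rule keys_add)
  show ?thesis
    apply (subst (1 2 3) lcb_super[where S = ?S and T = "Poly_Mapping.keys q"])
    using k by (auto simp: lookup_add algebra_simps single_add sum.distrib)
qed

lemma lcb_add2: "lc_bracket Om p (q1 + q2) = lc_bracket Om p q1 + lc_bracket Om p q2"
proof -
  let ?S = "Poly_Mapping.keys q1 \<union> Poly_Mapping.keys q2"
  have k: "Poly_Mapping.keys (q1 + q2) \<subseteq> ?S" by (rule keys_add)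
  show ?thesis
    apply (subst (1 2 3) lcb_super[where T = ?S and S = "Poly_Mapping.keys p"])
    using k by (auto simp: lookup_add algebra_simps single_add sum.distrib)
qed

lemma lcb_zero1 [simp]: "lc_bracket Om 0 q = 0" by (simp add: lc_bracket_def)
lemma lcb_zero2 [simp]: "lc_bracket Om p 0 = 0" by (simp add: lc_bracket_def)

lemma lcb_sum1: "lc_bracket Om (sum g S) q = (\<Sum>s\<in>S. lc_bracket Om (g s) q)"
  by (induction S rule: infinite_finite_induct) (auto simp: lcb_add1)
lemma lcb_sum2: "lc_bracket Om p (sum g S) = (\<Sum>s\<in>S. lc_bracket Om p (g s))"
  by (induction S rule: infinite_finite_induct) (auto simp: lcb_add2)

lemma lcb_single: "lc_bracket Om (Poly_Mapping.single a c) (Poly_Mapping.single b d)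
   = Poly_Mapping.single (a + b) (c * d * lc_form Om a b)"
  by (subst lcb_super[where S="{a}" and T="{b}"]) auto

lemma ms_super:
  assumes "finite S" "Poly_Mapping.keys p \<subseteq> S"
  shows "mono_subst Em p = (\<Sum>al\<in>S. Poly_Mapping.single (exp_subst Em al) (Poly_Mapping.lookup p al))"
  unfolding mono_subst_def
  by (rule sum.mono_neutral_left) (use assms in \<open>auto simp: in_keys_iff\<close>)

lemma ms_add: "mono_subst Em (p1 + p2) = mono_subst Em p1 + mono_subst Em p2"
proof -
  let ?S = "Poly_Mapping.keys p1 \<union> Poly_Mapping.keys p2"
  have k: "Poly_Mapping.keys (p1 + p2) \<subseteq> ?S" by (rule keys_add)
  show ?thesis
    apply (subst (1 2 3) ms_super[where S = ?S])
    using k by (auto simp: lookup_add single_add sum.distrib)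
qed

lemma ms_zero [simp]: "mono_subst Em 0 = 0" by (simp add: mono_subst_def)

lemma ms_sum: "mono_subst Em (sum g S) = (\<Sum>s\<in>S. mono_subst Em (g s))"
  by (induction S rule: infinite_finite_induct) (auto simp: ms_add)

lemma ms_single: "mono_subst Em (Poly_Mapping.single a c) = Poly_Mapping.single (exp_subst Em a) c"
  by (subst ms_super[where S="{a}"]) auto

lemma UNIV_varV: "(UNIV::varV set) = {aV,bV,cV,dV}"
  using varV.exhaust by blast
lemma UNIV_var3: "(UNIV::var3 set) = {A,B,C,D,E,F,G,H}"
  using var3.exhaust by blast

lemma lc_form_univ:
  fixes al be :: "'v::finite \<Rightarrow>\<^sub>0 int"
  shows "lc_form Om al be = (\<Sum>i\<in>UNIV. \<Sum>j\<in>UNIV. of_int (Poly_Mapping.lookup al i) * of_int (Poly_Mapping.lookup be j) * Om i j)"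
proof -
  have i: "\<And>i. (\<Sum>j\<in>Poly_Mapping.keys be. of_int (Poly_Mapping.lookup al i) * of_int (Poly_Mapping.lookup be j) * Om i j)
     = (\<Sum>j\<in>UNIV. of_int (Poly_Mapping.lookup al i) * of_int (Poly_Mapping.lookup be j) * Om i j)"
    by (rule sum.mono_neutral_left) (auto simp: in_keys_iff)
  show ?thesis unfolding lc_form_def i
    by (rule sum.mono_neutral_left) (auto simp: in_keys_iff)
qed

instance varV :: finite by standard (simp add: UNIV_varV)
instance var3 :: finite by standard (simp add: UNIV_var3)

lemma es_univ: "exp_subst Em (al :: 'v::finite \<Rightarrow>\<^sub>0 int) = (\<Sum>i\<in>UNIV. Poly_Mapping.map (\<lambda>k. Poly_Mapping.lookup al i * k) (Em i))"
  unfolding exp_subst_def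
  by (rule sum.mono_neutral_left) (auto simp: in_keys_iff map_eq_zero_iff)

lemma lookup_map': "f 0 = 0 \<Longrightarrow> Poly_Mapping.lookup (Poly_Mapping.map f p) k = f (Poly_Mapping.lookup p k)"
  by (simp add: map.rep_eq when_def)

lemma es_lookup: "Poly_Mapping.lookup (exp_subst imgV al) w =
  (case w of A \<Rightarrow> Poly_Mapping.lookup al aV | B \<Rightarrow> Poly_Mapping.lookup al bV
   | C \<Rightarrow> Poly_Mapping.lookup al cV | D \<Rightarrow> Poly_Mapping.lookup al dV
   | F \<Rightarrow> Poly_Mapping.lookup al aV + Poly_Mapping.lookup al bV | _ \<Rightarrow> 0)"
  unfolding es_univ UNIV_varV
  by (cases w) (simp_all add: lookup_sum lookup_map' lookup_add lookup_single when_def)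

lemma es_add: "exp_subst imgV (al + be) = exp_subst imgV al + exp_subst imgV be"
  by (rule poly_mapping_eqI) (simp add: lookup_add es_lookup split: var3.split)

lemma es_inj: "exp_subst imgV al = exp_subst imgV be \<longleftrightarrow> al = be"
proof
  assume h: "exp_subst imgV al = exp_subst imgV be"
  have "\<And>w. Poly_Mapping.lookup (exp_subst imgV al) w = Poly_Mapping.lookup (exp_subst imgV be) w"
    using h by simp
  from this[of A] this[of B] this[of C] this[of D] show "al = be"
    apply (intro poly_mapping_eqI)
    subgoal for v by (cases v) (simp_all add: es_lookup)
    done
qed simp

lemma form_eq: "lc_form Om3 (exp_subst imgV al) (exp_subst imgV be) = lc_form OmV al be"
  unfolding lc_form_univ UNIV_varV UNIV_var3
  by (simp add: es_lookup Om3_def OmV_def algebra_simps)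

lemma formH: "lc_form Om3 (Poly_Mapping.single H 1) (exp_subst imgV be) = 0"
  unfolding lc_form_univ UNIV_var3
  by (simp add: es_lookup Om3_def lookup_single algebra_simps)

lemma formG: "lc_form Om3 (Poly_Mapping.single G 1) (exp_subst imgV be) = 0"
  unfolding lc_form_univ UNIV_var3
  by (simp add: es_lookup Om3_def lookup_single algebra_simps)

lemma phi_single: "phi (Poly_Mapping.single a c) = Poly_Mapping.single (exp_subst imgV a) c"
  by (simp add: phi_def ms_single)

lemma phi_add: "phi (p + q) = phi p + phi q" by (simp add: phi_def ms_add)

lemma phi_expand: "phi p = (\<Sum>a\<in>Poly_Mapping.keys p. Poly_Mapping.single (exp_subst imgV a) (Poly_Mapping.lookup p a))"
  by (simp add: phi_def mono_subst_def)

lemma phi_sum: "phi (sum g S) = (\<Sum>s\<in>S. phi (g s))" by (simp add: phi_def ms_sum)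

lemma phi_mult: "phi (p * q) = phi p * phi q"
proof -
  have "phi (p * q) = phi ((\<Sum>a\<in>Poly_Mapping.keys p. Poly_Mapping.single a (Poly_Mapping.lookup p a)) *
       (\<Sum>b\<in>Poly_Mapping.keys q. Poly_Mapping.single b (Poly_Mapping.lookup q b)))"
    by (simp flip: pm_expand)
  also have "\<dots> = phi p * phi q"
    unfolding phi_expand[of p] phi_expand[of q] by (simp add: sum_distrib_left sum_distrib_right mult_single phi_sum phi_single es_add)
  finally show ?thesis .
qed

lemma phi_br: "phi (lc_bracket OmV p q) = lc_bracket Om3 (phi p) (phi q)"
proof -
  have "phi (lc_bracket OmV p q) = phi (lc_bracket OmV (\<Sum>a\<in>Poly_Mapping.keys p. Poly_Mapping.single a (Poly_Mapping.lookup p a))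
       (\<Sum>b\<in>Poly_Mapping.keys q. Poly_Mapping.single b (Poly_Mapping.lookup q b)))"
    by (simp flip: pm_expand)
  also have "\<dots> = lc_bracket Om3 (phi p) (phi q)"
    unfolding phi_expand[of p] phi_expand[of q] by (simp add: lcb_sum1 lcb_sum2 lcb_single phi_sum phi_single es_add form_eq)
  finally show ?thesis .
qed

lemma phi_lookup: "Poly_Mapping.lookup (phi p) (exp_subst imgV a) = Poly_Mapping.lookup p a"
  by (simp add: phi_expand lookup_sum lookup_single es_inj when_def in_keys_iff)

lemma phi_inj: "inj phi"
proof (rule injI)
  fix p q assume "phi p = phi q"
  then show "p = q" by (intro poly_mapping_eqI) (metis phi_lookup)
qed

lemma brH: "lc_bracket Om3 (lvar H) (phi p) = 0"
  by (simp add: phi_expand lvar_def lcb_sum2 lcb_single formH)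
lemma brG: "lc_bracket Om3 (lvar G) (phi p) = 0"
  by (simp add: phi_expand lvar_def lcb_sum2 lcb_single formG)

lemma es_gen: "exp_subst imgV (Poly_Mapping.single v 1) = imgV v"
  by (rule poly_mapping_eqI) (cases v; simp add: es_lookup lookup_single lookup_add when_def split: var3.split)

theorem mainTheorem6:
  shows "phi (lvar aV) = lvar A * lvar F
       \<and> phi (lvar bV) = lvar B * lvar F
       \<and> phi (lvar cV) = lvar C
       \<and> phi (lvar dV) = lvar D
       \<and> phi 1 = 1
       \<and> (\<forall>p q. phi (p + q) = phi p + phi q)
       \<and> (\<forall>p q. phi (p * q) = phi p * phi q)
       \<and> (\<forall>p q. phi (lc_bracket OmV p q) = lc_bracket Om3 (phi p) (phi q))
       \<and> inj phi
       \<and> (\<forall>x\<in>range phi. \<forall>y\<in>range phi. lc_bracket Om3 x y \<in> range phi)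
       \<and> (\<forall>p. lc_bracket Om3 (lvar H) (phi p) = 0)
       \<and> (\<forall>p. lc_bracket Om3 (lvar G) (phi p) = 0)"
proof -
  have one: "phi 1 = 1"
  proof -
    have "exp_subst imgV 0 = 0" by (rule poly_mapping_eqI) (simp add: es_lookup split: var3.split)
    then show ?thesis using phi_single[of 0 1] by simp
  qed
  have rng: "\<forall>x\<in>range phi. \<forall>y\<in>range phi. lc_bracket Om3 x y \<in> range phi"
    by (auto simp flip: phi_br)
  show ?thesis
    using one rng phi_add phi_mult phi_br phi_inj brH brG
    by (simp add: lvar_def phi_single es_gen mult_single)
qed

end
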